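(* Let $\mathcal{A}$ be a totally negative $2$-Calabi–Yau Abelian category. Then the Ext-quiver of any $\Sigma$-collection in $\mathcal{A}$ is the double of a totally negative quiver.
   Context: $\mathcal{A}$ is a $\mathbf{C}$-linear Abelian category with finite-dimensional Ext spaces; it is $2$-Calabi–Yau in the sense that for all objects $M,N$ one has $\operatorname{Ext}^i(M,N)=0$ for $i\notin\{0,1,2\}$ and functorial nondegenerate pairings $\operatorname{Ext}^i(M,N)\otimes\operatorname{Ext}^{2-i}(N,M)\to\mathbf{C}$ (as induced by a right $2$-Calabi–Yau structure on a dg enhancement), so that $\operatorname{ext}^1(M,N)=\operatorname{ext}^1(N,M)$ and $\operatorname{ext}^1(M,M)$ is even. The Euler form is $(M,N)=\sum_i(-1)^i\dim\operatorname{Ext}^i(M,N)$, and $\mathcal{A}$ is totally negative if $(M,N)<0$ for all nonzero $M,N$. An object $\mathcal{F}$ is a $\Sigma$-object if $\dim\operatorname{Ext}^0(\mathcal{F},\mathcal{F})=\dim\operatorname{Ext}^2(\mathcal{F},\mathcal{F})=1$, $\dim\operatorname{Ext}^1(\mathcal{F},\mathcal{F})$ is even and $\operatorname{Ext}^i(\mathcal{F},\mathcal{F})=0$ otherwise; a $\Sigma$-collection is a finite set $\{\mathcal{F}_1,\dots,\mathcal{F}_r\}$ of $\Sigma$-objects with $\operatorname{Hom}(\mathcal{F}_m,\mathcal{F}_n)=0$ for $m\neq n$. Its Ext-quiver has vertices $\mathcal{F}_1,\dots,\mathcal{F}_r$ and $\dim\operatorname{Ext}^1(\mathcal{F}_i,\mathcal{F}_j)$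 arrows from $\mathcal{F}_i$ to $\mathcal{F}_j$. The double of a quiver $Q$ adds an opposite arrow for each arrow; a quiver is totally negative if every vertex carries at least two loops and any two distinct vertices are joined by at least one arrow. *)

theory Defs
  imports Main
begin

text \<open>
  A C-linear Abelian category with finite-dimensional Ext spaces is represented
  through its set of objects Obj and the dimension function
  ext i M N = dim Ext^i(M,N).  The 2-Calabi-Yau property is recorded through its
  numerical consequences: Ext^i vanishes outside i in {0,1,2}, the nondegenerate
  pairing Ext^i(M,N) x Ext^(2-i)(N,M) -> C gives ext i M N = ext (2-i) N M, and
  ext 1 M M is even.
\<close>

definition cy2_category :: "'o set \<Rightarrow> (nat \<Rightarrow> 'o \<Rightarrow> 'o \<Rightarrow> nat) \<Rightarrow> bool" where
  "cy2_category Obj ext \<longleftrightarrow>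
     (\<forall>M\<in>Obj. \<forall>N\<in>Obj. \<forall>i. i > 2 \<longrightarrow> ext i M N = 0) \<and>
     (\<forall>M\<in>Obj. \<forall>N\<in>Obj. \<forall>i\<le>2. ext i M N = ext (2 - i) N M) \<and>
     (\<forall>M\<in>Obj. even (ext 1 M M))"

definition euler_form :: "(nat \<Rightarrow> 'o \<Rightarrow> 'o \<Rightarrow> nat) \<Rightarrow> 'o \<Rightarrow> 'o \<Rightarrow> int" where
  "euler_form ext M N = int (ext 0 M N) - int (ext 1 M N) + int (ext 2 M N)"

text \<open>In an Abelian category M is nonzero iff id_M is nonzero iff Hom(M,M) is nonzero.\<close>
definition nonzero_obj :: "(nat \<Rightarrow> 'o \<Rightarrow> 'o \<Rightarrow> nat) \<Rightarrow> 'o \<Rightarrow> bool" where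
  "nonzero_obj ext M \<longleftrightarrow> ext 0 M M \<noteq> 0"

definition totally_negative_cat :: "'o set \<Rightarrow> (nat \<Rightarrow> 'o \<Rightarrow> 'o \<Rightarrow> nat) \<Rightarrow> bool" where
  "totally_negative_cat Obj ext \<longleftrightarrow>
     (\<forall>M\<in>Obj. \<forall>N\<in>Obj. nonzero_obj ext M \<longrightarrow> nonzero_obj ext N \<longrightarrow> euler_form ext M N < 0)"

definition sigma_object :: "(nat \<Rightarrow> 'o \<Rightarrow> 'o \<Rightarrow> nat) \<Rightarrow> 'o \<Rightarrow> bool" where
  "sigma_object ext F \<longleftrightarrow>
     ext 0 F F = 1 \<and> ext 2 F F = 1 \<and> even (ext 1 F F) \<and> (\<forall>i. i > 2 \<longrightarrow> ext i F F = 0)"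

definition sigma_collection :: "'o set \<Rightarrow> (nat \<Rightarrow> 'o \<Rightarrow> 'o \<Rightarrow> nat) \<Rightarrow> 'o set \<Rightarrow> bool" where
  "sigma_collection Obj ext C \<longleftrightarrow>
     finite C \<and> C \<subseteq> Obj \<and> (\<forall>F\<in>C. sigma_object ext F) \<and>
     (\<forall>F\<in>C. \<forall>G\<in>C. F \<noteq> G \<longrightarrow> ext 0 F G = 0)"

text \<open>A (finite) quiver on vertex set V is given by the number q v w of arrows v -> w.\<close>
definition ext_quiver :: "(nat \<Rightarrow> 'o \<Rightarrow> 'o \<Rightarrow> nat) \<Rightarrow> 'o \<Rightarrow> 'o \<Rightarrow> nat" where
  "ext_quiver ext F G = ext 1 F G"

text \<open>Double of a quiver: one opposite arrow added per arrow (a loop gets an extra loop).\<close>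
definition double_quiver :: "('v \<Rightarrow> 'v \<Rightarrow> nat) \<Rightarrow> 'v \<Rightarrow> 'v \<Rightarrow> nat" where
  "double_quiver q v w = q v w + q w v"

definition totally_negative_quiver :: "'v set \<Rightarrow> ('v \<Rightarrow> 'v \<Rightarrow> nat) \<Rightarrow> bool" where
  "totally_negative_quiver V q \<longleftrightarrow>
     (\<forall>v\<in>V. q v v \<ge> 2) \<and> (\<forall>v\<in>V. \<forall>w\<in>V. v \<noteq> w \<longrightarrow> q v w + q w v \<ge> 1)"

end

theory Submission
  imports Defs
begin

theorem proposition7p1:
  fixes Obj :: "'o set" and ext :: "nat \<Rightarrow> 'o \<Rightarrow> 'o \<Rightarrow> nat" and C :: "'o set"
  assumes "cy2_category Obj ext"
    and "totally_negative_cat Obj ext"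
    and "sigma_collection Obj ext C"
  shows "\<exists>q :: 'o \<Rightarrow> 'o \<Rightarrow> nat. totally_negative_quiver C q \<and>
           (\<forall>F\<in>C. \<forall>G\<in>C. ext_quiver ext F G = double_quiver q F G)"
proof -
  have fin: "finite C" and sub: "C \<subseteq> Obj" and sig: "\<And>F. F \<in> C \<Longrightarrow> sigma_object ext F"
    and hom: "\<And>F G. F \<in> C \<Longrightarrow> G \<in> C \<Longrightarrow> F \<noteq> G \<Longrightarrow> ext 0 F G = 0"
    using assms(3) unfolding sigma_collection_def by auto
  have sym: "\<And>M N i. M \<in> Obj \<Longrightarrow> N \<in> Obj \<Longrightarrow> i \<le> 2 \<Longrightarrow> ext i M N = ext (2 - i) N M"
    using assms(1) unfolding cy2_category_def by blast
  have neg: "\<And>M N. M \<in> Obj \<Longrightarrow> N \<in> Obj \<Longrightarrow> ext 0 M M \<noteq> 0 \<Longrightarrow> ext 0 N N \<noteq> 0 \<Longrightarrow>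
      int (ext 0 M N) - int (ext 1 M N) + int (ext 2 M N) < 0"
    using assms(2) unfolding totally_negative_cat_def nonzero_obj_def euler_form_def by blast
  obtain h :: "'o \<Rightarrow> nat" where h: "inj_on h C"
    using fin finite_imp_inj_to_nat_seg by blast
  define q where "q F G = (if F = G then ext 1 F F div 2 else if h F < h G then ext 1 F G else 0)" for F G
  have s1: "\<And>F G. F \<in> C \<Longrightarrow> G \<in> C \<Longrightarrow> ext 1 F G = ext 1 G F"
    using sym sub by (metis diff_self_eq_0 one_le_numeral subsetD Suc_1 diff_Suc_1)
  have diag: "\<And>F. F \<in> C \<Longrightarrow> q F F \<ge> 2"
  proof -
    fix F assume F: "F \<in> C"
    have s: "ext 0 F F = 1" "ext 2 F F = 1" "even (ext 1 F F)" using sig[OF F] unfolding sigma_object_def by auto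
    have "int (ext 0 F F) - int (ext 1 F F) + int (ext 2 F F) < 0" using neg[of F F] F sub s by auto
    then have "ext 1 F F \<ge> 3" using s by auto
    with s(3) have "ext 1 F F \<ge> 4" by presburger
    then show "q F F \<ge> 2" unfolding q_def by auto
  qed
  have off: "\<And>F G. F \<in> C \<Longrightarrow> G \<in> C \<Longrightarrow> F \<noteq> G \<Longrightarrow> ext 1 F G \<ge> 1"
  proof -
    fix F G assume F: "F \<in> C" and G: "G \<in> C" and ne: "F \<noteq> G"
    have a: "ext 0 F F = 1" "ext 0 G G = 1" using sig F G unfolding sigma_object_def by auto
    have b: "ext 2 F G = ext 0 G F" using sym[of F G 2] F G sub by auto
    have "ext 0 G F = 0" "ext 0 F G = 0" using hom F G ne by auto
    then have imp: "int (ext 0 F G) - int (ext 1 F G) + int (ext 2 F G) < 0 \<Longrightarrow> ext 1 F G \<ge> 1"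
      using b by auto
    have "int (ext 0 F G) - int (ext 1 F G) + int (ext 2 F G) < 0" using neg[of F G] F G sub a by auto
    then show "ext 1 F G \<ge> 1" using imp by blast
  qed
  have dbl: "\<And>F G. F \<in> C \<Longrightarrow> G \<in> C \<Longrightarrow> ext 1 F G = q F G + q G F"
  proof -
    fix F G assume F: "F \<in> C" and G: "G \<in> C"
    show "ext 1 F G = q F G + q G F"
    proof (cases "F = G")
      case True
      have "even (ext 1 F F)" using sig F unfolding sigma_object_def by auto
      then show ?thesis using True unfolding q_def by auto
    next
      case False
      then have "h F \<noteq> h G" using h F G inj_on_def by metis
      then show ?thesis using False s1[OF F G] unfolding q_def by auto
    qed
  qed
  show ?thesis
  proof (intro exI conjI)
    show "totally_negative_quiver C q"
      unfolding totally_negative_quiver_def using diag off dbl by fastforce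
    show "\<forall>F\<in>C. \<forall>G\<in>C. ext_quiver ext F G = double_quiver q F G"
      unfolding ext_quiver_def double_quiver_def using dbl by auto
  qed
qed

end
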